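(* Let $X,Y$ be sets of numbers with $X<Y$ and let $a=(A\mid B)$ be a number (so $(A\mid B)$ is a cut in $T_{g(a)}$). Then $a$ is the unique number of minimal generation among all numbers $z$ with $X<z<Y$ if and only if the following three conditions hold: (i) $X<a<Y$; (ii) for every $t\in A$ there exists $x\in X$ with $x\geqslant t$; (iii) for every $t\in B$ there exists $y\in Y$ with $y\leqslant t$.
   Context: For a totally ordered set $E$, a cut in $E$ is a pair $(A\mid B)$ of subsets of $E$ with $A\cap B=\emptyset$, $A\cup B=E$ and $a\leqslant b$ for all $a\in A$, $b\in B$. The set $\mathcal C(E)$ of cuts is totally ordered by $(A\mid B)\leqslant (C\mid D)$ iff $A\subset C$. The amalgam $E\cup\mathcal C(E)$ (with $E$ and $\mathcal C(E)$ regarded as disjoint) is totally ordered by combining the orders on $E$ and on $\mathcal C(E)$ with the rule: for $x\in E$ and $c=(A\mid B)\in\mathcal C(E)$, $x<c$ if $x\in A$ and $c<x$ if $x\in B$. Numbers are built by transfinite recursion on ordinals $\alpha$: $T_\alpha=\bigcup_{\beta<\alpha}S_\beta$ (a totally ordered set), $S_\alpha=\mathcal C(T_\alpha)$ is the set of cuts in $T_\alpha$, and $T_{\alpha+1}=T_\alpha\cup S_\alpha$ carries the amalgam order. The class of numbers is $\mathsf S=\bigcup_\alpha S_\alpha$ with the resulting total order; the elements of $S_\alpha$ are the numbers of generation $\alpha$, written $g(a)=\alpha$. For sets of numbers, $X<z$ means $x<z$ for all $x\in X$, and $z<Y$ means $z<y$ for all $y\in Y$. For sets $X<Y$ of numbers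 there always exists a unique number of minimal generation among the numbers $z$ with $X<z<Y$. *)

theory Defs
  imports Main
begin

definition is_cut :: "'a::order set \<Rightarrow> 'a set \<Rightarrow> 'a set \<Rightarrow> bool" where
  "is_cut E A B \<longleftrightarrow> A \<inter> B = {} \<and> A \<union> B = E \<and> (\<forall>a\<in>A. \<forall>b\<in>B. a \<le> b)"

definition T_gen :: "('n \<Rightarrow> 'o::order) \<Rightarrow> 'o \<Rightarrow> 'n set" where
  "T_gen g \<alpha> = {x. g x < \<alpha>}"

text \<open>The number system: a type 'n of numbers, totally ordered, with generation map g
  into a well-ordered type 'o of ordinals (an initial segment of the ordinals), and the map c
  sending each number a to its cut (A | B) in T_(g a).  The axioms say exactly that
  S_alpha = {a. g a = alpha} is (via c) the set of all cuts of T_alpha, ordered by inclusion of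
  lower parts, and that T_(alpha+1) carries the amalgam order.\<close>
definition number_system :: "('n::linorder \<Rightarrow> 'o::wellorder) \<Rightarrow> ('n \<Rightarrow> 'n set \<times> 'n set) \<Rightarrow> bool" where
  "number_system g c \<longleftrightarrow>
     (\<forall>a. is_cut (T_gen g (g a)) (fst (c a)) (snd (c a))) \<and>
     (\<forall>\<alpha> A B. is_cut (T_gen g \<alpha>) A B \<longrightarrow> (\<exists>!a. g a = \<alpha> \<and> c a = (A, B))) \<and>
     (\<forall>a b. g a = g b \<longrightarrow> (a \<le> b \<longleftrightarrow> fst (c a) \<subseteq> fst (c b))) \<and>
     (\<forall>a x. g x < g a \<longrightarrow> ((x < a \<longleftrightarrow> x \<in> fst (c a)) \<and> (a < x \<longleftrightarrow> x \<in> snd (c a))))"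

definition between :: "'n::order set \<Rightarrow> 'n set \<Rightarrow> 'n \<Rightarrow> bool" where
  "between X Y z \<longleftrightarrow> (\<forall>x\<in>X. x < z) \<and> (\<forall>y\<in>Y. z < y)"

definition simplest_between :: "('n::order \<Rightarrow> 'o::order) \<Rightarrow> 'n set \<Rightarrow> 'n set \<Rightarrow> 'n \<Rightarrow> bool" where
  "simplest_between g X Y a \<longleftrightarrow> between X Y a \<and>
     (\<forall>z. between X Y z \<longrightarrow> g a \<le> g z) \<and>
     (\<forall>z. between X Y z \<and> g z = g a \<longrightarrow> z = a)"

end

theory Submission
  imports Defs
begin

theorem mainTheorem3:
  fixes g :: "'n::linorder \<Rightarrow> 'o::wellorder" and c :: "'n \<Rightarrow> 'n set \<times> 'n set"
    and X Y A B :: "'n set" and a :: 'n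
  assumes "number_system g c"
    and "\<forall>x\<in>X. \<forall>y\<in>Y. x < y"
    and "c a = (A, B)"
  shows "simplest_between g X Y a \<longleftrightarrow>
           (between X Y a \<and>
            (\<forall>t\<in>A. \<exists>x\<in>X. x \<ge> t) \<and>
            (\<forall>t\<in>B. \<exists>y\<in>Y. y \<le> t))"
proof -
  have ax1: "\<And>a. is_cut (T_gen g (g a)) (fst (c a)) (snd (c a))"
    and ax2: "\<And>\<alpha> A B. is_cut (T_gen g \<alpha>) A B \<Longrightarrow> (\<exists>!a. g a = \<alpha> \<and> c a = (A, B))"
    and ax3: "\<And>a b. g a = g b \<Longrightarrow> (a \<le> b \<longleftrightarrow> fst (c a) \<subseteq> fst (c b))"
    and ax4: "\<And>a x. g x < g a \<Longrightarrow> ((x < a \<longleftrightarrow> x \<in> fst (c a)) \<and> (a < x \<longleftrightarrow> x \<in> snd (c a)))"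
    using assms(1) unfolding number_system_def by blast+
  have cutA: "is_cut (T_gen g (g a)) A B" using ax1[of a] assms(3) by simp
  have uniq: "\<And>z. g z = g a \<Longrightarrow> c z = c a \<Longrightarrow> z = a"
    using ax2[OF ax1[of a]] by (metis prod.collapse)
  show ?thesis
  proof
    assume S: "simplest_between g X Y a"
    then have bw: "between X Y a" and mn: "\<And>z. between X Y z \<Longrightarrow> g a \<le> g z"
      unfolding simplest_between_def by auto
    have "\<forall>t\<in>A. \<exists>x\<in>X. x \<ge> t"
    proof
      fix t assume t: "t \<in> A"
      then have gt: "g t < g a" using cutA unfolding is_cut_def T_gen_def by auto
      then have "t < a" using ax4[OF gt] t assms(3) by simp
      show "\<exists>x\<in>X. x \<ge> t"
      proof (rule ccontr)
        assume "\<not> ?thesis"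
        then have "\<forall>x\<in>X. x < t" by (auto simp: not_le)
        with bw \<open>t < a\<close> have "between X Y t" unfolding between_def
          using order.strict_trans by blast
        with mn gt show False by (meson leD)
      qed
    qed
    moreover have "\<forall>t\<in>B. \<exists>y\<in>Y. y \<le> t"
    proof
      fix t assume t: "t \<in> B"
      then have gt: "g t < g a" using cutA unfolding is_cut_def T_gen_def by auto
      then have "a < t" using ax4[OF gt] t assms(3) by simp
      show "\<exists>y\<in>Y. y \<le> t"
      proof (rule ccontr)
        assume "\<not> ?thesis"
        then have "\<forall>y\<in>Y. t < y" by (auto simp: not_le)
        with bw \<open>a < t\<close> have "between X Y t" unfolding between_def
          using order.strict_trans by blast
        with mn gt show False by (meson leD)
      qed
    qed
    ultimately show "between X Y a \<and> (\<forall>t\<in>A. \<exists>x\<in>X. x \<ge> t) \<and> (\<forall>t\<in>B. \<exists>y\<in>Y. y \<le> t)"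
      using bw by blast
  next
    assume H: "between X Y a \<and> (\<forall>t\<in>A. \<exists>x\<in>X. x \<ge> t) \<and> (\<forall>t\<in>B. \<exists>y\<in>Y. y \<le> t)"
    then have bw: "between X Y a" and hA: "\<forall>t\<in>A. \<exists>x\<in>X. x \<ge> t"
      and hB: "\<forall>t\<in>B. \<exists>y\<in>Y. y \<le> t" by auto
    have gen: "g a \<le> g z" if z: "between X Y z" for z
    proof (rule ccontr)
      assume "\<not> g a \<le> g z"
      then have gz: "g z < g a" by (simp add: not_le)
      then have "z \<in> A \<or> z \<in> B" using cutA unfolding is_cut_def T_gen_def by auto
      then show False
      proof
        assume "z \<in> A"
        then obtain x where "x \<in> X" "x \<ge> z" using hA by blast
        with z show False unfolding between_def by (meson leD)
      next
        assume "z \<in> B"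
        then obtain y where "y \<in> Y" "y \<le> z" using hB by blast
        with z show False unfolding between_def by (meson leD)
      qed
    qed
    have un: "z = a" if z: "between X Y z" and gz: "g z = g a" for z
    proof (rule ccontr)
      assume ne: "z \<noteq> a"
      obtain A' B' where cz: "c z = (A', B')" by (cases "c z")
      have cutZ: "is_cut (T_gen g (g a)) A' B'" using ax1[of z] cz gz by simp
      have neq: "A' \<noteq> A"
      proof
        assume "A' = A"
        then have "B' = B" using cutZ cutA unfolding is_cut_def by blast
        with \<open>A' = A\<close> cz assms(3) uniq[OF gz] ne show False by simp
      qed
      show False
      proof (cases "z < a")
        case True
        then have "A' \<subseteq> A" using ax3[OF gz] cz assms(3) by (simp add: less_imp_le)
        with neq obtain t where t: "t \<in> A" "t \<notin> A'" by blast
        then have tB': "t \<in> B'" using cutZ cutA unfolding is_cut_def by blast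
        have gt: "g t < g a" using t cutA unfolding is_cut_def T_gen_def by auto
        have "z < t" using ax4[of t z] gt gz cz tB' by simp
        obtain x where "x \<in> X" "x \<ge> t" using hA t by blast
        with z \<open>z < t\<close> show False unfolding between_def by (metis less_le_trans less_asym)
      next
        case False
        then have "a < z" using ne by (simp add: not_less order.not_eq_order_implies_strict)
        then have "A \<subseteq> A'" using ax3[of a z] gz cz assms(3) by (simp add: less_imp_le)
        with neq obtain t where t: "t \<in> A'" "t \<notin> A" by blast
        then have tB: "t \<in> B" using cutZ cutA unfolding is_cut_def by blast
        have gt: "g t < g a" using t cutZ unfolding is_cut_def T_gen_def by auto
        have "t < z" using ax4[of t z] gt gz cz t by simp
        obtain y where "y \<in> Y" "y \<le> t" using hB tB by blast
        with z \<open>t < z\<close> show False unfolding between_def by (metis le_less_trans less_asym)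
      qed
    qed
    show "simplest_between g X Y a"
      unfolding simplest_between_def using bw gen un by blast
  qed
qed

end
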